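(* Let $n\in\mathbb N$ and $x_0\le x_1\le\dots\le x_n$ real numbers. For $j=1,\dots,n$ let $\widehat f_j\in C^\infty([x_{j-1},x_j])$ ($\mathbb F$-valued). Assume that $\widehat f_i^{(k)}(x_i)=\widehat f_{i+1}^{(k)}(x_i)$ for all $0\le k\le i-1$ and all $i\in\{1,\dots,n-1\}$. Then for every $\delta>0$ there exists $F\in C^{n-1}([x_0,x_n])$ such that for all $k=0,\dots,n-1$, $$|F^{(k)}(x)-\widehat f_j^{(k)}(x)|<\delta\quad\text{for all }x\in[x_{j-1},x_j]\text{ and all }j\in\{k+1,\dots,n\}.$$
   Context: $\mathbb F\in\{\mathbb R,\mathbb C\}$. Convention for possibly degenerate intervals: for $\alpha<\beta$, $C^m([\alpha,\beta])$ (resp. $C^\infty([\alpha,\beta])$) is the space of $m$-times continuously (resp. infinitely) differentiable functions on $[\alpha,\beta]$ with one-sided derivatives at the endpoints. For a degenerate interval $\{\alpha\}$, $C^m(\{\alpha\})$ is identified with $\mathbb F^{m+1}$ and $C^\infty(\{\alpha\})$ with the space of sequences $(a_k)_{k\ge0}\subset\mathbb F$, with the notation $f^{(k)}(\alpha)=a_k$. *)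

theory Defs
  imports "HOL-Analysis.Analysis"
begin

text \<open>A function of class C^m on a possibly degenerate interval [a,b] is represented by
  its derivative data: f k is the k-th derivative (k \<le> m).  For a degenerate interval a = b, the data f k a (k \<le> m) are arbitrary
  scalars, matching the identification C^m({a}) = F^(m+1).\<close>

definition Cm_on :: "nat \<Rightarrow> real \<Rightarrow> real \<Rightarrow> (nat \<Rightarrow> real \<Rightarrow> 'a::real_normed_vector) \<Rightarrow> bool" where
  "Cm_on m a b f \<longleftrightarrow>
     (a < b \<longrightarrow>
        (\<forall>k\<le>m. continuous_on {a..b} (f k)) \<and>
        (\<forall>k<m. \<forall>t\<in>{a..b}. (f k has_vector_derivative f (Suc k) t) (at t within {a..b})))"

definition Cinf_on :: "real \<Rightarrow> real \<Rightarrow> (nat \<Rightarrow> real \<Rightarrow> 'a::real_normed_vector) \<Rightarrow> bool" where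
  "Cinf_on a b f \<longleftrightarrow> (\<forall>m. Cm_on m a b f)"

end

theory Submission
  imports Defs "HOL-Computational_Algebra.Polynomial"
begin

lemma vd_bot:
  assumes "at t within S = bot"
  shows "(h has_vector_derivative v) (at t within S)"
  using assms by (simp add: has_vector_derivative_def) (rule has_derivative_bot, rule bounded_linear_scaleR_left)

lemma vd_Un:
  assumes "(h has_vector_derivative v) (at t within S)" "(h has_vector_derivative v) (at t within T)"
  shows "(h has_vector_derivative v) (at t within (S \<union> T))"
  using assms unfolding has_vector_derivative_def has_derivative_at_within
  by (auto intro: Lim_Un)

lemma Cm_on_cong:
  assumes eq: "\<And>k t. k \<le> M \<Longrightarrow> t \<in> {a..b} \<Longrightarrow> F k t = G k t" and G: "Cm_on M a b G"
  shows "Cm_on M a b F"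
  unfolding Cm_on_def
proof (intro impI conjI allI ballI)
  fix k assume ab: "a < b" and k: "k \<le> M"
  then have "continuous_on {a..b} (G k)" using G unfolding Cm_on_def by blast
  then show "continuous_on {a..b} (F k)"
    by (rule continuous_on_eq) (use eq k in auto)
next
  fix k t assume ab: "a < b" and k: "k < M" and t: "t \<in> {a..b}"
  then have d: "(G k has_vector_derivative G (Suc k) t) (at t within {a..b})" using G unfolding Cm_on_def by blast
  have e1: "F (Suc k) t = G (Suc k) t" using eq k t by simp
  have e2: "\<And>s. s \<in> {a..b} \<Longrightarrow> F k s = G k s" using eq k by simp
  show "(F k has_vector_derivative F (Suc k) t) (at t within {a..b})"
    unfolding e1 by (rule has_vector_derivative_transform[OF t e2 d])
qed

lemma glue:
  fixes E G :: "nat \<Rightarrow> real \<Rightarrow> 'a::real_normed_vector"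
  assumes ab: "a \<le> b" and bc: "b \<le> c"
    and E: "Cm_on M a b E" and G: "Cm_on M b c G"
    and eq: "\<forall>k\<le>M. E k b = G k b"
  shows "Cm_on M a c (\<lambda>k t. if t \<le> b then E k t else G k t)"
proof (cases "a = b")
  case True
  show ?thesis
    by (rule Cm_on_cong[OF _ G[folded True]]) (use eq True in auto)
next
  case False
  show ?thesis
  proof (cases "b = c")
    case True
    show ?thesis
      by (rule Cm_on_cong[OF _ E[unfolded True]]) (use True in auto)
  next
    case False2: False
    have ab': "a < b" using ab False by simp
    have bc': "b < c" using bc False2 by simp
    have un: "{a..c} = {a..b} \<union> {b..c}" using ab bc by auto
    let ?F = "\<lambda>k t. if t \<le> b then E k t else G k t"
    have F1: "Cm_on M a b ?F" by (rule Cm_on_cong[OF _ E]) auto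
    have F2: "Cm_on M b c ?F" by (rule Cm_on_cong[OF _ G]) (use eq in auto)
    show ?thesis unfolding Cm_on_def
    proof (intro impI conjI allI ballI)
      fix k assume "a < c" "k \<le> M"
      have c1: "continuous_on {a..b} (?F k)" using F1 ab' \<open>k \<le> M\<close> unfolding Cm_on_def by blast
      have c2: "continuous_on {b..c} (?F k)" using F2 bc' \<open>k \<le> M\<close> unfolding Cm_on_def by blast
      show "continuous_on {a..c} (?F k)"
        unfolding un by (rule continuous_on_closed_Un[OF _ _ c1 c2]) auto
    next
      fix k t assume "a < c" "k < M" "t \<in> {a..c}"
      have d1: "(?F k has_vector_derivative ?F (Suc k) t) (at t within {a..b})"
      proof (cases "t \<le> b")
        case True
        then have "t \<in> {a..b}" using \<open>t \<in> {a..c}\<close> by simp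
        then show ?thesis using F1 ab' \<open>k < M\<close> unfolding Cm_on_def by blast
      next
        case False
        have "at t within {a..b} = bot"
          using False by (subst at_within_eq_bot_iff) (auto simp: closure_closed)
        then show ?thesis by (rule vd_bot)
      qed
      have d2: "(?F k has_vector_derivative ?F (Suc k) t) (at t within {b..c})"
      proof (cases "b \<le> t")
        case True
        then have "t \<in> {b..c}" using \<open>t \<in> {a..c}\<close> by simp
        then show ?thesis using F2 bc' \<open>k < M\<close> unfolding Cm_on_def by blast
      next
        case False
        have "at t within {b..c} = bot"
          using False by (subst at_within_eq_bot_iff) (auto simp: closure_closed)
        then show ?thesis by (rule vd_bot)
      qed
      show "(?F k has_vector_derivative ?F (Suc k) t) (at t within {a..c})"
        unfolding un by (rule vd_Un[OF d1 d2])
    qed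
  qed
qed

lemma pderiv_iter_0: "poly ((pderiv ^^ k) q) 0 = fact k * coeff q (k::nat)" for q :: "real poly"
proof (induction k arbitrary: q)
  case 0 then show ?case by (simp add: poly_0_coeff_0)
next
  case (Suc k)
  have "(pderiv ^^ Suc k) q = (pderiv ^^ k) (pderiv q)" by (simp add: funpow_Suc_right del: funpow.simps)
  then show ?case using Suc[of "pderiv q"] by (simp add: coeff_pderiv algebra_simps)
qed

lemma pderiv_iter_root:
  fixes q :: "real poly"
  shows "[:-c,1:]^r dvd q \<Longrightarrow> k < r \<Longrightarrow> poly ((pderiv ^^ k) q) c = 0"
proof (induction k arbitrary: q r)
  case 0
  then obtain r' where r: "r = Suc r'" by (cases r) auto
  have "[:-c,1:] dvd q" using 0 r by (metis dvd_power dvd_trans zero_less_Suc)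
  then show ?case by (simp add: poly_eq_0_iff_dvd)
next
  case (Suc k)
  then obtain r' where r: "r = Suc r'" by (cases r) auto
  from Suc.prems obtain u where u: "q = [:-c,1:]^Suc r' * u" using r by (auto elim: dvdE)
  have "pderiv q = [:-c,1:]^r' * (smult (of_nat (Suc r')) u * pderiv [:-c,1:] + [:-c,1:] * pderiv u)"
    unfolding u pderiv_mult pderiv_power_Suc by (simp add: algebra_simps)
  then have "[:-c,1:]^r' dvd pderiv q" by simp
  moreover have "(pderiv ^^ Suc k) q = (pderiv ^^ k) (pderiv q)" by (simp add: funpow_Suc_right del: funpow.simps)
  ultimately show ?case using Suc.IH[of r' "pderiv q"] Suc.prems r by simp
qed

lemma good_poly:
  assumes "m \<le> M"
  shows "\<exists>p :: real poly. (\<forall>k\<le>M. poly ((pderiv ^^ k) p) 0 = (if k = m then 1 else 0)) \<and>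
           (\<forall>k\<le>M. poly ((pderiv ^^ k) p) (-1) = 0)"
proof -
  define z :: "real poly" where "z = [:0,-1:]"
  define y where "y = z ^ Suc M"
  define g where "g = (1 - y) ^ Suc M"
  define p where "p = smult (1 / fact m) (monom 1 m * g)"
  have "1 - y = (1 - z) * (\<Sum>i<Suc M. z^(Suc M - Suc i))" unfolding y_def by (rule one_diff_power_eq')
  moreover have "1 - z = [:1,1:]" by (simp add: z_def one_pCons)
  ultimately have "[:1,1:] dvd 1 - y" by (metis dvd_triv_left)
  then have "[:1,1:]^Suc M dvd g" unfolding g_def by (rule dvd_power_same)
  then have "[:-(-1),1:]^Suc M dvd p" unfolding p_def by (simp add: dvd_smult)
  then have r1: "\<forall>k\<le>M. poly ((pderiv ^^ k) p) (-1) = 0"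
    using pderiv_iter_root by (metis less_Suc_eq_le)
  have "g - 1 = ((1 - y) - 1) * (\<Sum>i<Suc M. 1^(Suc M - Suc i) * (1-y)^i)"
    unfolding g_def by (metis power_diff_sumr2 power_one)
  then have "g - 1 = y * (- (\<Sum>i<Suc M. 1^(Suc M - Suc i) * (1-y)^i))" by (simp add: algebra_simps)
  then have d1: "y dvd g - 1" by (metis dvd_triv_left)
  have "z = smult (-1) [:0,1:]" by (simp add: z_def)
  then have yeq: "y = smult ((-1)^Suc M) ([:0,1:]^Suc M)" unfolding y_def by (simp only: smult_power)
  have "[:0,1:]^Suc M dvd y" unfolding yeq by (rule dvd_smult) (rule dvd_refl)
  then have "[:0,1:]^Suc M dvd g - 1" using d1 by (rule dvd_trans)
  then have "[:-0,1:]^Suc M dvd g - 1" by simp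
  then have cg: "\<forall>j\<le>M. coeff (g - 1) j = 0"
    using pderiv_iter_root[of 0 "Suc M" "g - 1"] pderiv_iter_0[of _ "g - 1"] by auto
  have cg0: "coeff g j = (if j = 0 then 1 else 0)" if "j \<le> M" for j
    using cg that by (auto simp: coeff_diff)
  have r0: "\<forall>k\<le>M. poly ((pderiv ^^ k) p) 0 = (if k = m then 1 else 0)"
  proof (intro allI impI)
    fix k assume k: "k \<le> M"
    have "poly ((pderiv ^^ k) p) 0 = fact k * coeff p k" by (rule pderiv_iter_0)
    also have "\<dots> = (if k = m then 1 else 0)"
      using cg0[of "k - m"] k by (auto simp: p_def coeff_monom_mult)
    finally show "poly ((pderiv ^^ k) p) 0 = (if k = m then 1 else 0)" .
  qed
  show ?thesis using r0 r1 by blast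
qed

lemma phi:
  fixes a b \<epsilon> :: real
  assumes ab: "a < b" and mM: "m \<le> M" and eps: "\<epsilon> > 0"
  shows "\<exists>\<phi> :: nat \<Rightarrow> real \<Rightarrow> real. Cm_on M a b \<phi> \<and> (\<forall>k\<le>M. \<phi> k b = (if k = m then 1 else 0)) \<and>
     (\<forall>k\<le>M. \<phi> k a = 0) \<and> (\<forall>k<m. \<forall>t\<in>{a..b}. \<bar>\<phi> k t\<bar> < \<epsilon>)"
proof -
  obtain p :: "real poly" where p0: "\<forall>k\<le>M. poly ((pderiv ^^ k) p) 0 = (if k = m then 1 else 0)"
    and p1: "\<forall>k\<le>M. poly ((pderiv ^^ k) p) (-1) = 0" using good_poly[OF mM] by blast
  define h where "h u = (\<Sum>k\<le>M. \<bar>poly ((pderiv ^^ k) p) u\<bar>)" for u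
  have "continuous_on {-1..0} h" unfolding h_def by (intro continuous_intros)
  then have "compact (h ` {-1..0})" by (intro compact_continuous_image) auto
  then obtain B where B: "\<forall>y\<in>h ` {-1..0}. norm y \<le> B"
    using compact_imp_bounded bounded_iff by metis
  have Bk: "\<bar>poly ((pderiv ^^ k) p) u\<bar> \<le> B" if "k \<le> M" "u \<in> {-1..0}" for k u
  proof -
    have "\<bar>poly ((pderiv ^^ k) p) u\<bar> \<le> h u" unfolding h_def
      by (rule member_le_sum[where f="\<lambda>k. \<bar>poly ((pderiv ^^ k) p) u\<bar>"]) (use that in auto)
    also have "\<dots> \<le> B" using B that by force
    finally show ?thesis .
  qed
  have B0: "B \<ge> 0" using Bk[of 0 0] by force
  define \<eta> where "\<eta> = min (b - a) (min 1 (\<epsilon> / (2*(B+1))))"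
  have eta0: "\<eta> > 0" using ab eps B0 by (simp add: \<eta>_def)
  have eta1: "\<eta> \<le> b - a" "\<eta> \<le> 1" by (auto simp: \<eta>_def)
  have etaB: "\<eta> * B < \<epsilon>"
  proof -
    have "\<eta> \<le> \<epsilon> / (2*(B+1))" by (simp add: \<eta>_def)
    then have "\<eta> * B \<le> \<epsilon> / (2*(B+1)) * B" using B0 by (rule mult_right_mono)
    also have "\<dots> < \<epsilon>"
    proof -
      have "B/(2*(B+1)) < 1" using B0 by (simp add: field_simps)
      then have "\<epsilon> * (B/(2*(B+1))) < \<epsilon> * 1" using eps by (intro mult_strict_left_mono)
      then show ?thesis by simp
    qed
    finally show ?thesis .
  qed
  define P where "P k t = \<eta>^m / \<eta>^k * poly ((pderiv ^^ k) p) ((t - b)/\<eta>)" for k t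
  have Pd: "(P k has_real_derivative P (Suc k) t) (at t)" for k t
  proof -
    let ?q = "(pderiv ^^ k) p"
    have "((\<lambda>t. poly ?q ((t-b)/\<eta>)) has_real_derivative poly (pderiv ?q) ((t-b)/\<eta>) * (1/\<eta>)) (at t)"
      using eta0 by (intro DERIV_chain2[OF poly_DERIV]) (auto intro!: derivative_eq_intros)
    then have d: "((\<lambda>t. \<eta>^m / \<eta>^k * poly ?q ((t-b)/\<eta>)) has_real_derivative \<eta>^m / \<eta>^k * (poly (pderiv ?q) ((t-b)/\<eta>) * (1/\<eta>))) (at t)"
      by (rule DERIV_cmult)
    have e: "\<eta>^m / \<eta>^k * (poly (pderiv ?q) ((t-b)/\<eta>) * (1/\<eta>)) = P (Suc k) t"
      using eta0 by (simp add: P_def)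
    have Pk: "P k = (\<lambda>t. \<eta>^m / \<eta>^k * poly ?q ((t-b)/\<eta>))" by (simp add: fun_eq_iff P_def)
    show ?thesis unfolding Pk using DERIV_cong[OF d e] .
  qed
  have CP: "Cm_on M (b - \<eta>) b P" unfolding Cm_on_def
  proof (intro impI conjI allI ballI)
    fix k show "continuous_on {b - \<eta>..b} (P k)"
      using Pd by (meson DERIV_isCont continuous_at_imp_continuous_on)
  next
    fix k t show "(P k has_vector_derivative P (Suc k) t) (at t within {b - \<eta>..b})"
      using Pd[of k t] by (simp add: has_real_derivative_iff_has_vector_derivative[symmetric] has_field_derivative_at_within)
  qed
  have CZ: "Cm_on M a (b - \<eta>) (\<lambda>k t. 0::real)" unfolding Cm_on_def
    by (auto intro: has_vector_derivative_const)
  have Pend: "\<forall>k\<le>M. (0::real) = P k (b - \<eta>)"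
    using p1 eta0 by (simp add: P_def)
  have G: "Cm_on M a b (\<lambda>k t. if t \<le> b - \<eta> then 0 else P k t)"
    by (rule glue[OF _ _ CZ CP Pend]) (use eta0 eta1 in auto)
  define \<phi> where "\<phi> = (\<lambda>k t. if t \<le> b - \<eta> then 0 else P k t)"
  have r0: "Cm_on M a b \<phi>" unfolding \<phi>_def by (rule G)
  have r1: "\<forall>k\<le>M. \<phi> k b = (if k = m then 1 else 0)"
  proof (intro allI impI)
    fix k assume "k \<le> M"
    then have "P k b = \<eta>^m / \<eta>^k * (if k = m then 1 else 0)" using p0 by (simp add: P_def)
    then show "\<phi> k b = (if k = m then 1 else 0)"
      using eta0 by (cases "k = m") (simp_all add: \<phi>_def)
  qed
  have r2: "\<forall>k\<le>M. \<phi> k a = 0"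
  proof (intro allI impI)
    fix k assume "k \<le> M"
    have "a \<le> b - \<eta>" using eta1 by linarith
    then show "\<phi> k a = 0" by (simp add: \<phi>_def)
  qed
  have r3: "\<forall>k<m. \<forall>t\<in>{a..b}. \<bar>\<phi> k t\<bar> < \<epsilon>"
  proof (intro allI impI ballI)
    fix k t assume k: "k < m" and t: "t \<in> {a..b}"
    show "\<bar>\<phi> k t\<bar> < \<epsilon>"
    proof (cases "t \<le> b - \<eta>")
      case True then show ?thesis using eps by (simp add: \<phi>_def)
    next
      case False
      have t1: "-\<eta> \<le> t - b" "t - b \<le> 0" using False t by auto
      have u1: "-1 \<le> (t - b)/\<eta>" using t1(1) eta0 by (simp add: le_divide_eq)
      have u2: "(t - b)/\<eta> \<le> 0" using t1(2) eta0 by (simp add: divide_le_0_iff)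
      have u: "(t - b)/\<eta> \<in> {-1..0}" using u1 u2 by simp
      have e1: "\<eta>^m / \<eta>^k = \<eta>^(m-k)" by (rule power_diff[symmetric]) (use eta0 k in auto)
      have e2: "\<eta>^(m-k) \<le> \<eta>^1" by (rule power_decreasing) (use eta0 eta1 k in auto)
      have e: "\<eta>^m / \<eta>^k \<le> \<eta>" using e1 e2 by simp
      have kM: "k \<le> M" using k mM by simp
      have "\<bar>P k t\<bar> = \<bar>\<eta>^m / \<eta>^k\<bar> * \<bar>poly ((pderiv ^^ k) p) ((t - b)/\<eta>)\<bar>"
        unfolding P_def abs_mult by (rule refl)
      also have "\<dots> = \<eta>^m / \<eta>^k * \<bar>poly ((pderiv ^^ k) p) ((t - b)/\<eta>)\<bar>"
        using eta0 by simp
      also have "\<dots> \<le> \<eta> * B"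
        by (rule mult_mono[OF e Bk[OF kM u]]) (use eta0 in auto)
      also have "\<dots> < \<epsilon>" by (rule etaB)
      finally have "\<bar>P k t\<bar> < \<epsilon>" .
      then show ?thesis using False by (simp add: \<phi>_def)
    qed
  qed
  show ?thesis using r0 r1 r2 r3 by blast
qed

lemma ext:
  fixes f :: "nat \<Rightarrow> real \<Rightarrow> 'a::real_normed_vector"
  assumes ab: "a < b" and f: "Cm_on M a b f" and sM: "s \<le> M"
    and d: "\<forall>k\<le>s. d k = f k b" and dl: "\<delta> > 0"
  shows "\<exists>E. Cm_on M a b E \<and> (\<forall>k\<le>M. E k b = d k) \<and> (\<forall>k\<le>s. E k a = f k a) \<and>
             (\<forall>k\<le>s. \<forall>t\<in>{a..b}. norm (E k t - f k t) < \<delta>)"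
proof -
  define c where "c m = d m - f m b" for m
  define S where "S = (\<Sum>m\<in>{s<..M}. norm (c m))"
  have S0: "S \<ge> 0" unfolding S_def by (rule sum_nonneg) simp
  define \<epsilon> where "\<epsilon> = \<delta> / (S + 1)"
  have eps: "\<epsilon> > 0" using dl S0 by (simp add: \<epsilon>_def)
  have "\<forall>m\<in>{s<..M}. \<exists>\<phi> :: nat \<Rightarrow> real \<Rightarrow> real. Cm_on M a b \<phi> \<and> (\<forall>k\<le>M. \<phi> k b = (if k = m then 1 else 0)) \<and>
     (\<forall>k\<le>M. \<phi> k a = 0) \<and> (\<forall>k<m. \<forall>t\<in>{a..b}. \<bar>\<phi> k t\<bar> < \<epsilon>)"
    using phi[OF ab _ eps] by simp
  then obtain \<Phi> where \<Phi>: "\<forall>m\<in>{s<..M}. Cm_on M a b (\<Phi> m) \<and> (\<forall>k\<le>M. \<Phi> m k b = (if k = m then 1 else 0)) \<and>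
     (\<forall>k\<le>M. \<Phi> m k a = 0) \<and> (\<forall>k<m. \<forall>t\<in>{a..b}. \<bar>\<Phi> m k t\<bar> < \<epsilon>)"
    by (metis bchoice)
  define E where "E k t = f k t + (\<Sum>m\<in>{s<..M}. \<Phi> m k t *\<^sub>R c m)" for k t
  have CE: "Cm_on M a b E" unfolding Cm_on_def
  proof (intro impI conjI allI ballI)
    fix k assume "a < b" "k \<le> M"
    have cf: "continuous_on {a..b} (f k)" using f ab \<open>k \<le> M\<close> unfolding Cm_on_def by blast
    have cp: "\<And>m. m \<in> {s<..M} \<Longrightarrow> continuous_on {a..b} (\<Phi> m k)"
      using \<Phi> ab \<open>k \<le> M\<close> unfolding Cm_on_def by blast
    show "continuous_on {a..b} (E k)" unfolding E_def[abs_def]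
      by (intro continuous_on_add cf continuous_on_sum continuous_on_scaleR cp continuous_on_const)
  next
    fix k t assume "a < b" "k < M" and t: "t \<in> {a..b}"
    have df: "(f k has_vector_derivative f (Suc k) t) (at t within {a..b})"
      using f ab \<open>k < M\<close> t unfolding Cm_on_def by blast
    have dp: "\<And>m. m \<in> {s<..M} \<Longrightarrow> ((\<lambda>t. \<Phi> m k t *\<^sub>R c m) has_vector_derivative \<Phi> m (Suc k) t *\<^sub>R c m) (at t within {a..b})"
    proof -
      fix m assume m: "m \<in> {s<..M}"
      have "(\<Phi> m k has_vector_derivative \<Phi> m (Suc k) t) (at t within {a..b})"
        using \<Phi> m ab \<open>k < M\<close> t unfolding Cm_on_def by blast
      then have "(\<Phi> m k has_field_derivative \<Phi> m (Suc k) t) (at t within {a..b})"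
        by (simp add: has_real_derivative_iff_has_vector_derivative)
      from has_vector_derivative_scaleR[OF this has_vector_derivative_const[of "c m"]]
      show "((\<lambda>t. \<Phi> m k t *\<^sub>R c m) has_vector_derivative \<Phi> m (Suc k) t *\<^sub>R c m) (at t within {a..b})"
        by simp
    qed
    show "(E k has_vector_derivative E (Suc k) t) (at t within {a..b})"
      unfolding E_def[abs_def]
      by (intro has_vector_derivative_add df has_vector_derivative_sum dp)
  qed
  have Eb: "\<forall>k\<le>M. E k b = d k"
  proof (intro allI impI)
    fix k assume k: "k \<le> M"
    have "(\<Sum>m\<in>{s<..M}. \<Phi> m k b *\<^sub>R c m) = (\<Sum>m\<in>{s<..M}. if k = m then c m else 0)"
      by (rule sum.cong) (use \<Phi> k in auto)
    also have "\<dots> = (if k \<in> {s<..M} then c k else 0)" by simp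
    finally have "E k b = f k b + (if k \<in> {s<..M} then c k else 0)" by (simp add: E_def)
    then show "E k b = d k" using d k by (auto simp: c_def)
  qed
  have Ea: "\<forall>k\<le>s. E k a = f k a"
  proof (intro allI impI)
    fix k assume k: "k \<le> s"
    have "(\<Sum>m\<in>{s<..M}. \<Phi> m k a *\<^sub>R c m) = 0"
      by (rule sum.neutral) (use \<Phi> k sM in auto)
    then show "E k a = f k a" by (simp add: E_def)
  qed
  have Eapp: "\<forall>k\<le>s. \<forall>t\<in>{a..b}. norm (E k t - f k t) < \<delta>"
  proof (intro allI impI ballI)
    fix k t assume k: "k \<le> s" and t: "t \<in> {a..b}"
    have "norm (E k t - f k t) = norm (\<Sum>m\<in>{s<..M}. \<Phi> m k t *\<^sub>R c m)" by (simp add: E_def)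
    also have "\<dots> \<le> (\<Sum>m\<in>{s<..M}. norm (\<Phi> m k t *\<^sub>R c m))" by (rule norm_sum)
    also have "\<dots> \<le> (\<Sum>m\<in>{s<..M}. \<epsilon> * norm (c m))"
    proof (rule sum_mono)
      fix m assume m: "m \<in> {s<..M}"
      have "\<bar>\<Phi> m k t\<bar> < \<epsilon>" using \<Phi> m k t by auto
      then show "norm (\<Phi> m k t *\<^sub>R c m) \<le> \<epsilon> * norm (c m)"
        by (simp add: mult_right_mono)
    qed
    also have "\<dots> = \<epsilon> * S" by (simp add: S_def sum_distrib_left)
    also have "\<dots> < \<delta>" using S0 dl by (simp add: \<epsilon>_def field_simps)
    finally show "norm (E k t - f k t) < \<delta>" .
  qed
  show ?thesis using CE Eb Ea Eapp by blast
qed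

lemma chain_le:
  assumes "\<forall>i<n. x i \<le> x (Suc i)" "i \<le> j" "j \<le> n"
  shows "x i \<le> (x j :: real)"
  using assms(2,3)
proof (induction j)
  case 0 then show ?case by simp
next
  case (Suc j)
  show ?case
  proof (cases "i = Suc j")
    case True then show ?thesis by simp
  next
    case False
    then have "x i \<le> x j" using Suc by simp
    also have "x j \<le> x (Suc j)" using assms(1) Suc.prems by simp
    finally show ?thesis .
  qed
qed

lemma Q:
  fixes \<delta> :: real assumes dl: "\<delta> > 0"
  shows "\<forall>(x::nat\<Rightarrow>real) (f::nat\<Rightarrow>nat\<Rightarrow>real\<Rightarrow>'a::real_normed_vector) s. 1 \<le> n \<longrightarrow>
    (\<forall>i<n. x i \<le> x (Suc i)) \<longrightarrow> (\<forall>j\<in>{1..n}. Cinf_on (x (j-1)) (x j) (f j)) \<longrightarrow>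
    (\<forall>i\<in>{1..n-1}. \<forall>k<i+s. f i k (x i) = f (Suc i) k (x i)) \<longrightarrow>
    (\<exists>F. Cm_on (n-1+s) (x 0) (x n) F \<and> (\<forall>k\<le>s. F k (x 0) = f 1 k (x 0)) \<and>
       (\<forall>j\<in>{1..n}. \<forall>k<j+s. \<forall>t\<in>{x (j-1)..x j}. norm (F k t - f j k t) < \<delta>))"
proof (induction n)
  case 0 show ?case by simp
next
  case (Suc n)
  show ?case
  proof (intro allI impI)
    fix x :: "nat\<Rightarrow>real" and f :: "nat\<Rightarrow>nat\<Rightarrow>real\<Rightarrow>'a" and s :: nat
    assume mono: "\<forall>i<Suc n. x i \<le> x (Suc i)"
      and sm: "\<forall>j\<in>{1..Suc n}. Cinf_on (x (j-1)) (x j) (f j)"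
      and mt: "\<forall>i\<in>{1..Suc n-1}. \<forall>k<i+s. f i k (x i) = f (Suc i) k (x i)"
    have sm1: "Cinf_on (x 0) (x 1) (f 1)" using sm by force
    show "\<exists>F. Cm_on (Suc n-1+s) (x 0) (x (Suc n)) F \<and> (\<forall>k\<le>s. F k (x 0) = f 1 k (x 0)) \<and>
       (\<forall>j\<in>{1..Suc n}. \<forall>k<j+s. \<forall>t\<in>{x (j-1)..x j}. norm (F k t - f j k t) < \<delta>)"
    proof (cases "n = 0")
      case True
      have "Cm_on (Suc n-1+s) (x 0) (x (Suc n)) (f 1)" using sm1 True by (simp add: Cinf_on_def)
      moreover have "\<forall>j\<in>{1..Suc n}. \<forall>k<j+s. \<forall>t\<in>{x (j-1)..x j}. norm (f 1 k t - f j k t) < \<delta>"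
        using True dl by auto
      ultimately show ?thesis by blast
    next
      case False
      then have n1: "1 \<le> n" by simp
      define x' where "x' i = x (Suc i)" for i
      define f' where "f' j = f (Suc j)" for j
      have mono': "\<forall>i<n. x' i \<le> x' (Suc i)" using mono by (simp add: x'_def)
      have sm': "\<forall>j\<in>{1..n}. Cinf_on (x' (j-1)) (x' j) (f' j)"
      proof
        fix j assume j: "j \<in> {1..n}"
        then have "Suc j \<in> {1..Suc n}" by simp
        then have "Cinf_on (x (Suc j - 1)) (x (Suc j)) (f (Suc j))" using sm by blast
        moreover have "Suc (j - 1) = j" using j by simp
        ultimately show "Cinf_on (x' (j-1)) (x' j) (f' j)" by (simp add: x'_def f'_def)
      qed
      have mt': "\<forall>i\<in>{1..n-1}. \<forall>k<i+Suc s. f' i k (x' i) = f' (Suc i) k (x' i)"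
      proof (intro ballI allI impI)
        fix i k assume i: "i \<in> {1..n-1}" and k: "k < i + Suc s"
        then have "Suc i \<in> {1..Suc n - 1}" "k < Suc i + s" by auto
        then show "f' i k (x' i) = f' (Suc i) k (x' i)" using mt by (simp add: x'_def f'_def)
      qed
      obtain G where G1: "Cm_on (n-1+Suc s) (x' 0) (x' n) G"
        and G2: "\<forall>k\<le>Suc s. G k (x' 0) = f' 1 k (x' 0)"
        and G3: "\<forall>j\<in>{1..n}. \<forall>k<j+Suc s. \<forall>t\<in>{x' (j-1)..x' j}. norm (G k t - f' j k t) < \<delta>"
        using Suc.IH[THEN spec[where x=x'], THEN spec[where x=f'], THEN spec[where x="Suc s"],
            THEN mp, OF n1, THEN mp, OF mono', THEN mp, OF sm', THEN mp, OF mt'] by (elim exE conjE)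
      define M where "M = n + s"
      have G1': "Cm_on M (x 1) (x (Suc n)) G" using G1 n1 by (simp add: M_def x'_def)
      have x01: "x 0 \<le> x 1" using mono by simp
      have x1n: "x 1 \<le> x (Suc n)" by (rule chain_le[OF mono]) auto
      have f1: "Cm_on M (x 0) (x 1) (f 1)" using sm1 by (simp add: Cinf_on_def)
      have dG: "\<forall>k\<le>s. G k (x 1) = f 1 k (x 1)"
      proof (intro allI impI)
        fix k assume k: "k \<le> s"
        have "G k (x 1) = f 2 k (x 1)" using G2 k by (simp add: x'_def f'_def numeral_2_eq_2)
        moreover have "f 1 k (x 1) = f (Suc 1) k (x 1)" using mt n1 k by force
        ultimately show "G k (x 1) = f 1 k (x 1)" by (simp add: numeral_2_eq_2)
      qed
      obtain E where E1: "Cm_on M (x 0) (x 1) E" and E2: "\<forall>k\<le>M. E k (x 1) = G k (x 1)"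
        and E3: "\<forall>k\<le>s. E k (x 0) = f 1 k (x 0)"
        and E4: "\<forall>k\<le>s. \<forall>t\<in>{x 0..x 1}. norm (E k t - f 1 k t) < \<delta>"
      proof (cases "x 0 < x 1")
        case True
        have "\<forall>k\<le>s. G k (x 1) = f 1 k (x 1)" by (rule dG)
        from ext[OF True f1 _ this dl] obtain E where "Cm_on M (x 0) (x 1) E \<and> (\<forall>k\<le>M. E k (x 1) = G k (x 1)) \<and>
          (\<forall>k\<le>s. E k (x 0) = f 1 k (x 0)) \<and> (\<forall>k\<le>s. \<forall>t\<in>{x 0..x 1}. norm (E k t - f 1 k t) < \<delta>)"
          by (auto simp: M_def)
        then show ?thesis using that by blast
      next
        case False
        then have eq: "x 0 = x 1" using x01 by simp
        have "Cm_on M (x 0) (x 1) (\<lambda>k t. G k (x 1))" using eq by (simp add: Cm_on_def)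
        moreover have "\<forall>k\<le>s. G k (x 1) = f 1 k (x 0)" using dG eq by simp
        moreover have "\<forall>k\<le>s. \<forall>t\<in>{x 0..x 1}. norm (G k (x 1) - f 1 k t) < \<delta>" using dG eq dl by auto
        ultimately show ?thesis using that[of "\<lambda>k t. G k (x 1)"] by blast
      qed
      define F where "F = (\<lambda>k t. if t \<le> x 1 then E k t else G k t)"
      have CF: "Cm_on M (x 0) (x (Suc n)) F" unfolding F_def by (rule glue[OF x01 x1n E1 G1' E2])
      have F0: "\<forall>k\<le>s. F k (x 0) = f 1 k (x 0)" using E3 x01 by (simp add: F_def)
      have Fapp: "\<forall>j\<in>{1..Suc n}. \<forall>k<j+s. \<forall>t\<in>{x (j-1)..x j}. norm (F k t - f j k t) < \<delta>"
      proof (intro ballI allI impI)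
        fix j k t assume j: "j \<in> {1..Suc n}" and k: "k < j + s" and t: "t \<in> {x (j-1)..x j}"
        show "norm (F k t - f j k t) < \<delta>"
        proof (cases "j = 1")
          case True
          then show ?thesis using E4 k t by (simp add: F_def)
        next
          case False
          then obtain j' where j': "j = Suc j'" "j' \<in> {1..n}" using j by (cases j) auto
          have xj: "x 1 \<le> x j'" by (rule chain_le[OF mono]) (use j' in auto)
          have kM: "k \<le> M" using k j' by (simp add: M_def)
          have "F k t = G k t"
          proof (cases "t \<le> x 1")
            case True
            then have "t = x 1" using t xj j' by simp
            then show ?thesis using E2 kM by (simp add: F_def)
          qed (simp add: F_def)
          moreover have "norm (G k t - f' j' k t) < \<delta>"
            using G3 j' k t by (simp add: x'_def)
          ultimately show ?thesis using j' by (simp add: f'_def)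
        qed
      qed
      have "Suc n - 1 + s = M" by (simp add: M_def)
      then show ?thesis using CF F0 Fapp by metis
    qed
  qed
qed

theorem mainTheorem12:
  fixes n :: nat and x :: "nat \<Rightarrow> real"
    and f :: "nat \<Rightarrow> nat \<Rightarrow> real \<Rightarrow> 'a::real_normed_field"
  assumes mono: "\<forall>i<n. x i \<le> x (Suc i)"
    and smooth: "\<forall>j\<in>{1..n}. Cinf_on (x (j - 1)) (x j) (f j)"
    and match: "\<forall>i\<in>{1..n - 1}. \<forall>k<i. f i k (x i) = f (Suc i) k (x i)"
    and delta: "\<delta> > 0"
  shows "\<exists>F :: nat \<Rightarrow> real \<Rightarrow> 'a. Cm_on (n - 1) (x 0) (x n) F \<and>
           (\<forall>k<n. \<forall>j\<in>{k+1..n}. \<forall>t\<in>{x (j - 1)..x j}. norm (F k t - f j k t) < \<delta>)"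
proof (cases "n = 0")
  case True
  have "Cm_on (n - 1) (x 0) (x n) (\<lambda>k t. 0 :: 'a)" using True by (simp add: Cm_on_def)
  then show ?thesis using True by blast
next
  case False
  have match': "\<forall>i\<in>{1..n - 1}. \<forall>k<i+0. f i k (x i) = f (Suc i) k (x i)" using match by simp
  obtain F where F1: "Cm_on (n-1+0) (x 0) (x n) F"
    and F3: "\<forall>j\<in>{1..n}. \<forall>k<j+0. \<forall>t\<in>{x (j-1)..x j}. norm (F k t - f j k t) < \<delta>"
    using Q[OF delta, rule_format, of n x f 0] False mono smooth match' by auto
  have "\<forall>k<n. \<forall>j\<in>{k+1..n}. \<forall>t\<in>{x (j - 1)..x j}. norm (F k t - f j k t) < \<delta>"
    using F3 by auto
  then show ?thesis using F1 by auto
qed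

end
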